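(* Let $\alpha:\mathcal X\to[\alpha_{\min},\alpha_{\max}]$ with $0<\alpha_{\min}\le\alpha_{\max}<1$, and let $\mathcal A(x,m)=\{\mu\in\mathcal P(\mathcal X):\mu(y)\le m(y)/\alpha(x)\ \forall y\in\mathcal X\}$ (the dual sets of the Average Value at Risk mapping $\sigma(x,m,v)=\min_{\eta\in\mathbb R}\{\eta+\frac1{\alpha(x)}\sum_y m(y)\max(0,v(y)-\eta)\}$). Then the associated risk multikernel $\mathfrak M$ is semi-differentiable at $\mathcal I$ in every direction $K\in\mathcal T_{\mathcal Q}(\mathcal I)$, with semi-derivative \[ \mathfrak D(K)=\Big\{D\in\mathcal T_{\mathcal Q}(\mathcal I): 0\le D(y|x)\le\frac{K(y|x)}{\alpha(x)}\ \text{for all } x,y\in\mathcal X,\ y\ne x,\ \ D(\mathcal X|x)=0\ \text{for all }x\in\mathcal X\Big\}. \]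
   Context: $\mathcal X$ is a finite set, $\mathcal P(\mathcal X)$ the probability measures on $\mathcal X$, $\mathcal S$ the vector space of signed kernels $K:\mathcal X\to\mathcal M(\mathcal X)$, written $K(y|x)$, with $K(\mathcal X|x)=\sum_yK(y|x)$ and norm $\|K\|=\sup\{\sum_{y}\varphi(y)K(y|x):x\in\mathcal X,\ -1\le\varphi\le1\}$; $\mathcal Q\subset\mathcal S$ the stochastic kernels; $\mathcal I(x)=\delta_x$. $\mathrm d(K,B)=\inf_{M\in B}\|K-M\|$ ($=+\infty$ if $B=\emptyset$), and $\mathrm{dist}(\mathcal S_1,\mathcal S_2)=\max(\sup_{K\in\mathcal S_1}\mathrm d(K,\mathcal S_2),\sup_{K\in\mathcal S_2}\mathrm d(K,\mathcal S_1))$. The tangent cone is $\mathcal T_{\mathcal Q}(\mathcal I)=\{K\in\mathcal S:\lim_{\tau\downarrow0}\mathrm d(K,\frac1\tau(\mathcal Q-\mathcal I))=0\}$. The risk multikernel associated with $\mathcal A$ is $\mathfrak M(Q)=\{M\in\mathcal Q: M(x)\in\mathcal A(x,Q(x))\ \forall x\}$. $\mathfrak M$ is semi-differentiable at $\mathcal I$ in direction $K\in\mathcal T_{\mathcal Q}(\mathcal I)$ with semi-derivative $\mathfrak D(K)$ (a nonempty subset of $\mathcal S$) if for every $\varepsilon_n\downarrow0$ and every $K_n\to K$ with $K_n\in\mathcal T_{\mathcal Q}(\mathcal I)$, $\lim_{n}\mathrm{dist}\big(\frac1{\varepsilon_n}[\mathfrak M(\mathcal I+\varepsilon_nK_n)-\mathcal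 I],\mathfrak D(K)\big)=0$. *)

theory Defs
  imports "HOL-Analysis.Analysis"
begin

text \<open>Signed kernels on a finite set 'x: K x y stands for K(y|x).\<close>
type_synonym 'x kernel = "'x \<Rightarrow> 'x \<Rightarrow> real"

definition kmass :: "('x::finite) kernel \<Rightarrow> 'x \<Rightarrow> real" where
  "kmass K x = (\<Sum>y\<in>UNIV. K x y)"

definition knorm :: "('x::finite) kernel \<Rightarrow> real" where
  "knorm K = Sup {(\<Sum>y\<in>UNIV. \<phi> y * K x y) | x \<phi>. \<forall>y. -1 \<le> \<phi> y \<and> \<phi> y \<le> 1}"

definition prob_vecs :: "('x::finite \<Rightarrow> real) set" where
  "prob_vecs = {\<mu>. (\<forall>y. 0 \<le> \<mu> y) \<and> (\<Sum>y\<in>UNIV. \<mu> y) = 1}"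

definition stoch_kernels :: "('x::finite) kernel set" where
  "stoch_kernels = {Q. \<forall>x. Q x \<in> prob_vecs}"

definition id_kernel :: "('x::finite) kernel" where
  "id_kernel = (\<lambda>x y. if y = x then 1 else 0)"

definition kd :: "('x::finite) kernel \<Rightarrow> 'x kernel set \<Rightarrow> ereal" where
  "kd K B = (if B = {} then \<infinity> else ereal (Inf {knorm (K - M) | M. M \<in> B}))"

definition kdist :: "('x::finite) kernel set \<Rightarrow> 'x kernel set \<Rightarrow> ereal" where
  "kdist S1 S2 = max (SUP K\<in>S1. kd K S2) (SUP K\<in>S2. kd K S1)"

definition tangent_cone_I :: "('x::finite) kernel set" where
  "tangent_cone_I = {K. ((\<lambda>\<tau>. kd K ((\<lambda>M x y. (M x y - id_kernel x y) / \<tau>) ` stoch_kernels))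
                          \<longlongrightarrow> 0) (at_right 0)}"

definition risk_multikernel ::
  "('x::finite \<Rightarrow> ('x \<Rightarrow> real) \<Rightarrow> ('x \<Rightarrow> real) set) \<Rightarrow> 'x kernel \<Rightarrow> 'x kernel set" where
  "risk_multikernel A Q = {M \<in> stoch_kernels. \<forall>x. M x \<in> A x (Q x)}"

definition semidiff_at_I ::
  "('x::finite kernel \<Rightarrow> 'x kernel set) \<Rightarrow> 'x kernel \<Rightarrow> 'x kernel set \<Rightarrow> bool" where
  "semidiff_at_I MM K D \<longleftrightarrow> K \<in> tangent_cone_I \<and> D \<noteq> {} \<and>
     (\<forall>\<epsilon> Ks. (\<forall>n. 0 < \<epsilon> n) \<and> decseq \<epsilon> \<and> \<epsilon> \<longlonglongrightarrow> 0 \<and>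
        (\<forall>n. Ks n \<in> tangent_cone_I) \<and> (\<lambda>n. knorm (Ks n - K)) \<longlonglongrightarrow> 0 \<longrightarrow>
        (\<lambda>n. kdist ((\<lambda>M x y. (M x y - id_kernel x y) / \<epsilon> n)
                       ` MM (\<lambda>x y. id_kernel x y + \<epsilon> n * Ks n x y)) D) \<longlonglongrightarrow> 0)"

definition avar_dual :: "('x::finite \<Rightarrow> real) \<Rightarrow> 'x \<Rightarrow> ('x \<Rightarrow> real) \<Rightarrow> ('x \<Rightarrow> real) set" where
  "avar_dual \<alpha> x m = {\<mu> \<in> prob_vecs. \<forall>y. \<mu> y \<le> m y / \<alpha> x}"

end

theory Submission
  imports Defs
begin


lemma knorm_bdd:
  fixes M :: "'x::finite kernel"
  shows "bdd_above {(\<Sum>y\<in>UNIV. \<phi> y * M x y) | x \<phi>. \<forall>y. -1 \<le> \<phi> y \<and> \<phi> y \<le> 1}"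
proof (rule bdd_aboveI, safe)
  fix x and \<phi> :: "'x \<Rightarrow> real" assume h: "\<forall>y. -1 \<le> \<phi> y \<and> \<phi> y \<le> 1"
  have "(\<Sum>y\<in>UNIV. \<phi> y * M x y) \<le> (\<Sum>y\<in>UNIV. \<bar>M x y\<bar>)"
  proof (rule sum_mono)
    fix y
    have "\<phi> y * M x y \<le> \<bar>\<phi> y * M x y\<bar>" by simp
    also have "\<dots> = \<bar>\<phi> y\<bar> * \<bar>M x y\<bar>" by (simp add: abs_mult)
    also have "\<dots> \<le> 1 * \<bar>M x y\<bar>" using h by (intro mult_right_mono) (auto simp: abs_le_iff)
    finally show "\<phi> y * M x y \<le> \<bar>M x y\<bar>" by simp
  qed
  also have "\<dots> \<le> (\<Sum>x'\<in>UNIV. \<Sum>y\<in>UNIV. \<bar>M x' y\<bar>)"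
    by (rule member_le_sum) (auto intro: sum_nonneg)
  finally show "(\<Sum>y\<in>UNIV. \<phi> y * M x y) \<le> (\<Sum>x'\<in>UNIV. \<Sum>y\<in>UNIV. \<bar>M x' y\<bar>)" .
qed

lemma knorm_ge:
  fixes M :: "'x::finite kernel"
  assumes "\<forall>y. -1 \<le> \<phi> y \<and> \<phi> y \<le> 1"
  shows "(\<Sum>y\<in>UNIV. \<phi> y * M x y) \<le> knorm M"
  unfolding knorm_def using assms by (intro cSup_upper[OF _ knorm_bdd]) blast

lemma knorm_rowabs:
  fixes M :: "'x::finite kernel"
  shows "(\<Sum>y\<in>UNIV. \<bar>M x y\<bar>) \<le> knorm M"
proof -
  have "(\<Sum>y\<in>UNIV. \<bar>M x y\<bar>) = (\<Sum>y\<in>UNIV. (if M x y \<ge> 0 then 1 else -1) * M x y)"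
    by (rule sum.cong) auto
  also have "\<dots> \<le> knorm M" by (rule knorm_ge) auto
  finally show ?thesis .
qed

lemma knorm_entry:
  fixes M :: "'x::finite kernel"
  shows "\<bar>M x y\<bar> \<le> knorm M"
  by (rule order_trans[OF member_le_sum knorm_rowabs]) auto

lemma knorm_nonneg: "0 \<le> knorm (M :: 'x::finite kernel)"
  using knorm_entry[of M undefined undefined] by simp

lemma knorm_mass:
  fixes M :: "'x::finite kernel"
  shows "\<bar>kmass M x\<bar> \<le> knorm M"
  unfolding kmass_def by (rule order_trans[OF sum_abs knorm_rowabs])

lemma knorm_le:
  fixes M :: "'x::finite kernel"
  assumes "\<forall>x. (\<Sum>y\<in>UNIV. \<bar>M x y\<bar>) \<le> c"
  shows "knorm M \<le> c"
  unfolding knorm_def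
proof (rule cSup_least)
  show "{(\<Sum>y\<in>UNIV. \<phi> y * M x y) | x \<phi>. \<forall>y. -1 \<le> \<phi> y \<and> \<phi> y \<le> 1} \<noteq> {}"
  proof -
    have "(\<Sum>y\<in>UNIV. (\<lambda>_. 0::real) y * M undefined y) \<in> {(\<Sum>y\<in>UNIV. \<phi> y * M x y) | x \<phi>. \<forall>y. -1 \<le> \<phi> y \<and> \<phi> y \<le> 1}"
      by (intro CollectI exI[of _ undefined] exI[of _ "\<lambda>_. 0::real"]) simp
    then show ?thesis by blast
  qed
next
  fix v assume "v \<in> {(\<Sum>y\<in>UNIV. \<phi> y * M x y) | x \<phi>. \<forall>y. -1 \<le> \<phi> y \<and> \<phi> y \<le> 1}"
  then obtain x \<phi> where v: "v = (\<Sum>y\<in>UNIV. \<phi> y * M x y)" and h: "\<forall>y. -1 \<le> \<phi> y \<and> \<phi> y \<le> 1" by blast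
  have "v \<le> (\<Sum>y\<in>UNIV. \<bar>M x y\<bar>)" unfolding v
  proof (rule sum_mono)
    fix y
    have "\<phi> y * M x y \<le> \<bar>\<phi> y * M x y\<bar>" by simp
    also have "\<dots> = \<bar>\<phi> y\<bar> * \<bar>M x y\<bar>" by (simp add: abs_mult)
    also have "\<dots> \<le> 1 * \<bar>M x y\<bar>" using h by (intro mult_right_mono) (auto simp: abs_le_iff)
    finally show "\<phi> y * M x y \<le> \<bar>M x y\<bar>" by simp
  qed
  also have "\<dots> \<le> c" using assms by blast
  finally show "v \<le> c" .
qed

lemma knorm_zero: "knorm ((\<lambda>x y. 0) :: 'x::finite kernel) = 0"
  using knorm_le[of "(\<lambda>x y. 0)::'x kernel" 0] knorm_nonneg[of "(\<lambda>x y. 0)::'x kernel"] by simp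

lemma kminus_apply: "((A::'x::finite kernel) - B) x y = A x y - B x y"
  by simp

lemma kd_le:
  fixes A :: "'x::finite kernel"
  assumes "D \<in> B" shows "kd A B \<le> ereal (knorm (A - D))"
proof -
  have "Inf {knorm (A - M) | M. M \<in> B} \<le> knorm (A - D)"
    by (rule cInf_lower) (use assms knorm_nonneg in \<open>auto intro!: bdd_belowI[of _ 0]\<close>)
  then show ?thesis using assms unfolding kd_def by auto
qed

lemma kd_ge:
  fixes A :: "'x::finite kernel"
  assumes "B \<noteq> {}" "\<forall>D\<in>B. c \<le> knorm (A - D)" shows "ereal c \<le> kd A B"
proof -
  have "c \<le> Inf {knorm (A - M) | M. M \<in> B}"
    by (rule cInf_greatest) (use assms in auto)
  then show ?thesis using assms unfolding kd_def by auto
qed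

lemma kd_nonneg:
  fixes A :: "'x::finite kernel"
  assumes "B \<noteq> {}" shows "0 \<le> kd A B"
  using kd_ge[OF assms, of 0 A] knorm_nonneg by (auto simp: zero_ereal_def)



definition kcone :: "'x::finite kernel \<Rightarrow> bool" where
  "kcone K \<longleftrightarrow> (\<forall>x y. y \<noteq> x \<longrightarrow> 0 \<le> K x y) \<and> (\<forall>x. kmass K x = 0)"

lemma sum_id_kernel: "(\<Sum>y\<in>UNIV. id_kernel x y) = (1::real)"
  unfolding id_kernel_def by simp

lemma kmass_diff: "kmass ((P::'x::finite kernel) - Q) x = kmass P x - kmass Q x"
  unfolding kmass_def by (simp add: sum_subtractf)

lemma S_kcone:
  fixes M :: "'x::finite kernel"
  assumes "0 < \<tau>" "M \<in> stoch_kernels"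
  shows "kcone (\<lambda>x y. (M x y - id_kernel x y) / \<tau>)"
proof -
  have M: "\<And>x y. 0 \<le> M x y" "\<And>x. (\<Sum>y\<in>UNIV. M x y) = 1"
    using assms(2) unfolding stoch_kernels_def prob_vecs_def by auto
  show ?thesis unfolding kcone_def kmass_def
  proof (intro conjI allI impI)
    fix x y :: 'x assume "y \<noteq> x"
    then show "0 \<le> (M x y - id_kernel x y) / \<tau>" using M assms(1) by (simp add: id_kernel_def)
  next
    fix x
    show "(\<Sum>y\<in>UNIV. (M x y - id_kernel x y) / \<tau>) = 0"
      by (simp add: sum_divide_distrib[symmetric] sum_subtractf M sum_id_kernel)
  qed
qed

lemma stoch_ne: "(stoch_kernels :: 'x::finite kernel set) \<noteq> {}"
proof -
  have "id_kernel \<in> stoch_kernels"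
    unfolding stoch_kernels_def prob_vecs_def using sum_id_kernel
    by (auto simp: id_kernel_def)
  then show ?thesis by blast
qed

lemma tc_imp_kcone:
  fixes K :: "'x::finite kernel"
  assumes "K \<in> tangent_cone_I" shows "kcone K"
proof (rule ccontr)
  assume nc: "\<not> kcone K"
  define S where "S = (\<lambda>\<tau>::real. (\<lambda>M x y. (M x y - id_kernel x y) / \<tau>) ` (stoch_kernels :: 'x kernel set))"
  obtain c where c: "0 < c" and cS: "\<And>\<tau> D. 0 < \<tau> \<Longrightarrow> D \<in> S \<tau> \<Longrightarrow> c \<le> knorm (K - D)"
  proof (cases "\<exists>x y. y \<noteq> x \<and> K x y < 0")
    case True
    then obtain x y where xy: "y \<noteq> x" "K x y < 0" by blast
    show ?thesis
    proof (rule that[of "- K x y"])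
      fix \<tau> :: real and D assume "0 < \<tau>" "D \<in> S \<tau>"
      then have "kcone D" unfolding S_def using S_kcone by blast
      then have "0 \<le> D x y" using xy unfolding kcone_def by blast
      moreover have "\<bar>(K - D) x y\<bar> \<le> knorm (K - D)" by (rule knorm_entry)
      ultimately show "- K x y \<le> knorm (K - D)" by simp
    qed (use xy in simp)
  next
    case False
    then obtain x where x: "kmass K x \<noteq> 0" using nc unfolding kcone_def by force
    show ?thesis
    proof (rule that[of "\<bar>kmass K x\<bar>"])
      fix \<tau> :: real and D assume "0 < \<tau>" "D \<in> S \<tau>"
      then have "kcone D" unfolding S_def using S_kcone by blast
      then have "kmass D x = 0" unfolding kcone_def by blast
      moreover have "\<bar>kmass (K - D) x\<bar> \<le> knorm (K - D)" by (rule knorm_mass)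
      ultimately show "\<bar>kmass K x\<bar> \<le> knorm (K - D)" by (simp add: kmass_diff)
    qed (use x in simp)
  qed
  have ge: "\<And>\<tau>. 0 < \<tau> \<Longrightarrow> ereal c \<le> kd K (S \<tau>)"
    by (rule kd_ge) (use cS stoch_ne in \<open>auto simp: S_def\<close>)
  have lim: "((\<lambda>\<tau>. kd K (S \<tau>)) \<longlongrightarrow> 0) (at_right 0)"
    using assms unfolding tangent_cone_I_def S_def by simp
  have "\<forall>\<^sub>F \<tau> in at_right 0. kd K (S \<tau>) < ereal c"
    using order_tendstoD(2)[OF lim] c by simp
  moreover have "\<forall>\<^sub>F \<tau> in at_right (0::real). 0 < \<tau>"
    by (simp add: eventually_at_right_less)
  ultimately have "\<forall>\<^sub>F \<tau> in at_right (0::real). False"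
    by eventually_elim (use ge in force)
  then show False by simp
qed

lemma kcone_imp_tc:
  fixes K :: "'x::finite kernel"
  assumes "kcone K" shows "K \<in> tangent_cone_I"
proof -
  define s where "s = (\<Sum>x\<in>UNIV. \<bar>K x x\<bar>)"
  have s0: "0 \<le> s" unfolding s_def by (auto intro: sum_nonneg)
  have Kd: "\<And>x y. y \<noteq> x \<Longrightarrow> 0 \<le> K x y" and Km: "\<And>x. (\<Sum>y\<in>UNIV. K x y) = 0"
    using assms unfolding kcone_def kmass_def by auto
  have ev: "\<forall>\<^sub>F \<tau> in at_right (0::real).
      kd K ((\<lambda>M x y. (M x y - id_kernel x y) / \<tau>) ` stoch_kernels) = 0"
    unfolding eventually_at_right_field
  proof (intro exI[of _ "1 / (1 + s)"] conjI allI impI)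
    show "(0::real) < 1 / (1 + s)" using s0 by simp
  next
    fix \<tau> :: real assume t: "0 < \<tau>" "\<tau> < 1 / (1 + s)"
    define M where "M = (\<lambda>x y. id_kernel x y + \<tau> * K x y)"
    have "\<tau> * (1 + s) < 1" using t s0 by (simp add: field_simps)
    then have ts: "\<tau> * s \<le> 1" using t by (simp add: algebra_simps)
    have Mst: "M \<in> stoch_kernels" unfolding stoch_kernels_def prob_vecs_def
    proof (intro CollectI allI conjI)
      fix x y :: 'x
      show "0 \<le> M x y"
      proof (cases "y = x")
        case True
        have "\<bar>K x x\<bar> \<le> s" unfolding s_def by (rule member_le_sum) auto
        have "\<tau> * \<bar>K x x\<bar> \<le> \<tau> * s" by (rule mult_left_mono) (use t \<open>\<bar>K x x\<bar> \<le> s\<close> in auto)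
        moreover have "\<tau> * (- \<bar>K x x\<bar>) \<le> \<tau> * K x x" by (rule mult_left_mono) (use t in auto)
        ultimately have "0 \<le> 1 + \<tau> * K x x" using ts by linarith
        then show ?thesis using True by (simp add: M_def id_kernel_def)
      next
        case False then show ?thesis using Kd[OF False] t by (simp add: M_def id_kernel_def)
      qed
    next
      fix x :: 'x show "(\<Sum>y\<in>UNIV. M x y) = 1"
      proof -
        have "(\<Sum>y\<in>UNIV. M x y) = (\<Sum>y\<in>UNIV. id_kernel x y) + \<tau> * (\<Sum>y\<in>UNIV. K x y)"
          unfolding M_def by (simp add: sum.distrib sum_distrib_left)
        then show ?thesis by (simp add: sum_id_kernel Km)
      qed
    qed
    have eq: "(\<lambda>x y. (M x y - id_kernel x y) / \<tau>) = K" using t by (auto simp: M_def)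
    have KS: "K \<in> (\<lambda>M x y. (M x y - id_kernel x y) / \<tau>) ` stoch_kernels"
      by (rule image_eqI[where x=M]) (use eq Mst in auto)
    have KK: "K - K = (\<lambda>x y. 0)" by (intro ext) simp
    have "kd K ((\<lambda>M x y. (M x y - id_kernel x y) / \<tau>) ` stoch_kernels) \<le> ereal (knorm (K - K))"
      by (rule kd_le[OF KS])
    also have "\<dots> = 0" unfolding KK knorm_zero by (simp add: zero_ereal_def)
    finally have "kd K ((\<lambda>M x y. (M x y - id_kernel x y) / \<tau>) ` stoch_kernels) \<le> 0" .
    moreover have "0 \<le> kd K ((\<lambda>M x y. (M x y - id_kernel x y) / \<tau>) ` stoch_kernels)"
      using KS by (intro kd_nonneg) blast
    ultimately show "kd K ((\<lambda>M x y. (M x y - id_kernel x y) / \<tau>) ` stoch_kernels) = 0" by simp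
  qed
  show ?thesis unfolding tangent_cone_I_def
    using tendsto_eventually[OF ev] by simp
qed

lemma tc_iff: "(K::'x::finite kernel) \<in> tangent_cone_I \<longleftrightarrow> kcone K"
  using tc_imp_kcone kcone_imp_tc by blast



definition Dset :: "('x::finite \<Rightarrow> real) \<Rightarrow> 'x kernel \<Rightarrow> 'x kernel set" where
  "Dset \<alpha> L = {D. kcone D \<and> (\<forall>x y. y \<noteq> x \<longrightarrow> D x y \<le> L x y / \<alpha> x)}"

lemma kmass_split: "kmass (D::'x::finite kernel) x = D x x + (\<Sum>y\<in>UNIV - {x}. D x y)"
  unfolding kmass_def by (rule sum.remove) auto

lemma knorm_sym: "knorm ((A::'x::finite kernel) - B) = knorm (B - A)"
proof -
  have "\<And>P Q::'x kernel. knorm (P - Q) \<le> knorm (Q - P)"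
  proof -
    fix P Q :: "'x kernel"
    show "knorm (P - Q) \<le> knorm (Q - P)"
    proof (rule knorm_le, rule allI)
      fix x
      have "(\<Sum>y\<in>UNIV. \<bar>(P - Q) x y\<bar>) = (\<Sum>y\<in>UNIV. \<bar>(Q - P) x y\<bar>)"
        by (rule sum.cong) auto
      also have "\<dots> \<le> knorm (Q - P)" by (rule knorm_rowabs)
      finally show "(\<Sum>y\<in>UNIV. \<bar>(P - Q) x y\<bar>) \<le> knorm (Q - P)" .
    qed
  qed
  then show ?thesis by (meson antisym)
qed

lemma image_eq_Dset:
  fixes L :: "'x::finite kernel" and \<alpha> :: "'x \<Rightarrow> real"
  assumes e: "0 < e" and L: "kcone L" and ap: "\<forall>x. 0 < \<alpha> x"
    and c1: "\<forall>x. e * (- L x x) \<le> \<alpha> x" and c2: "\<forall>x. \<alpha> x \<le> 1 + e * L x x"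
  shows "(\<lambda>M x y. (M x y - id_kernel x y) / e) ` risk_multikernel (avar_dual \<alpha>) (\<lambda>x y. id_kernel x y + e * L x y)
         = Dset \<alpha> L"
proof (intro equalityI subsetI)
  fix D assume "D \<in> (\<lambda>M x y. (M x y - id_kernel x y) / e) ` risk_multikernel (avar_dual \<alpha>) (\<lambda>x y. id_kernel x y + e * L x y)"
  then obtain M where D: "D = (\<lambda>x y. (M x y - id_kernel x y) / e)"
    and M: "M \<in> stoch_kernels" "\<forall>x. M x \<in> avar_dual \<alpha> x (\<lambda>y. id_kernel x y + e * L x y)"
    unfolding risk_multikernel_def by auto
  have kc: "kcone D" unfolding D by (rule S_kcone[OF e M(1)])
  have "\<forall>x y. y \<noteq> x \<longrightarrow> D x y \<le> L x y / \<alpha> x"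
  proof (intro allI impI)
    fix x y :: 'x assume xy: "y \<noteq> x"
    have "M x y \<le> (id_kernel x y + e * L x y) / \<alpha> x" using M(2) unfolding avar_dual_def by auto
    then have "M x y \<le> e * L x y / \<alpha> x" using xy by (simp add: id_kernel_def)
    then have "M x y \<le> e * (L x y / \<alpha> x)" by simp
    then have "M x y / e \<le> L x y / \<alpha> x" using e by (simp add: pos_divide_le_eq mult.commute)
    then show "D x y \<le> L x y / \<alpha> x" using xy e by (simp add: D id_kernel_def)
  qed
  then show "D \<in> Dset \<alpha> L" using kc unfolding Dset_def by blast
next
  fix D assume "D \<in> Dset \<alpha> L"
  then have kc: "kcone D" and ub: "\<And>x y. y \<noteq> x \<Longrightarrow> D x y \<le> L x y / \<alpha> x" unfolding Dset_def by auto
  have Doff: "\<And>x y. y \<noteq> x \<Longrightarrow> 0 \<le> D x y" and Dm: "\<And>x. kmass D x = 0" using kc unfolding kcone_def by auto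
  have Lm: "\<And>x. kmass L x = 0" using L unfolding kcone_def by auto
  define M where "M = (\<lambda>x y. id_kernel x y + e * D x y)"
  have Dxx: "\<And>x. D x x = - (\<Sum>y\<in>UNIV - {x}. D x y)"
  proof -
    fix x show "D x x = - (\<Sum>y\<in>UNIV - {x}. D x y)" using Dm[of x] kmass_split[of D x] by linarith
  qed
  have Lxx: "\<And>x. L x x = - (\<Sum>y\<in>UNIV - {x}. L x y)"
  proof -
    fix x show "L x x = - (\<Sum>y\<in>UNIV - {x}. L x y)" using Lm[of x] kmass_split[of L x] by linarith
  qed
  have Dle0: "\<And>x. D x x \<le> 0" unfolding Dxx using Doff by (metis (no_types, lifting) DiffE neg_le_0_iff_le singletonI sum_nonneg)
  have Dge: "\<And>x. L x x / \<alpha> x \<le> D x x"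
  proof -
    fix x :: 'x
    have "(\<Sum>y\<in>UNIV - {x}. D x y) \<le> (\<Sum>y\<in>UNIV - {x}. L x y / \<alpha> x)"
      by (rule sum_mono) (use ub in auto)
    also have "\<dots> = (\<Sum>y\<in>UNIV - {x}. L x y) / \<alpha> x" by (simp add: sum_divide_distrib)
    finally show "L x x / \<alpha> x \<le> D x x" unfolding Dxx Lxx by simp
  qed
  have Mst: "M \<in> stoch_kernels" unfolding stoch_kernels_def prob_vecs_def
  proof (intro CollectI allI conjI)
    fix x y :: 'x
    show "0 \<le> M x y"
    proof (cases "y = x")
      case True
      have "e * (L x x / \<alpha> x) \<le> e * D x x" using Dge e by (intro mult_left_mono) auto
      moreover have "- 1 \<le> e * (L x x / \<alpha> x)"
      proof -
        have h: "- (e * L x x) \<le> \<alpha> x" "0 < \<alpha> x" using c1 ap by auto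
        then have "- 1 \<le> (e * L x x) / \<alpha> x" by (simp add: pos_le_divide_eq)
        then show ?thesis by simp
      qed
      ultimately show ?thesis using True by (simp add: M_def id_kernel_def)
    next
      case False then show ?thesis using Doff[OF False] e by (simp add: M_def id_kernel_def)
    qed
  next
    fix x :: 'x
    have "(\<Sum>y\<in>UNIV. M x y) = (\<Sum>y\<in>UNIV. id_kernel x y) + e * (\<Sum>y\<in>UNIV. D x y)"
      unfolding M_def by (simp add: sum.distrib sum_distrib_left)
    then show "(\<Sum>y\<in>UNIV. M x y) = 1" using Dm by (simp add: sum_id_kernel kmass_def)
  qed
  have "\<forall>x. M x \<in> avar_dual \<alpha> x (\<lambda>y. id_kernel x y + e * L x y)"
  proof
    fix x :: 'x
    have P1: "M x \<in> prob_vecs" using Mst unfolding stoch_kernels_def by auto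
    have "\<forall>y. M x y \<le> (id_kernel x y + e * L x y) / \<alpha> x"
    proof
      fix y :: 'x show "M x y \<le> (id_kernel x y + e * L x y) / \<alpha> x"
      proof (cases "y = x")
        case True
        have "M x y \<le> 1" using True Dle0 e by (simp add: M_def id_kernel_def mult_nonneg_nonpos)
        also have "1 \<le> (1 + e * L x x) / \<alpha> x" using c2 ap by (simp add: le_divide_eq_1)
        finally show ?thesis using True by (simp add: id_kernel_def)
      next
        case False
        have "e * D x y \<le> e * (L x y / \<alpha> x)" using ub[OF False] e by (intro mult_left_mono) auto
        then show ?thesis using False by (simp add: M_def id_kernel_def)
      qed
    qed
    then show "M x \<in> avar_dual \<alpha> x (\<lambda>y. id_kernel x y + e * L x y)"
      using P1 unfolding avar_dual_def by blast
  qed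
  then have MR: "M \<in> risk_multikernel (avar_dual \<alpha>) (\<lambda>x y. id_kernel x y + e * L x y)"
    unfolding risk_multikernel_def using Mst by blast
  have eq: "(\<lambda>x y. (M x y - id_kernel x y) / e) = D" using e by (auto simp: M_def)
  show "D \<in> (\<lambda>M x y. (M x y - id_kernel x y) / e) ` risk_multikernel (avar_dual \<alpha>) (\<lambda>x y. id_kernel x y + e * L x y)"
    by (rule image_eqI[where x=M]) (use eq MR in auto)
qed



lemma Dset_zero: "kcone L \<Longrightarrow> \<forall>x. 0 < \<alpha> x \<Longrightarrow> (\<lambda>x y. 0) \<in> Dset \<alpha> L"
  unfolding Dset_def kcone_def kmass_def by (auto intro!: divide_nonneg_pos)

lemma haus:
  fixes L K :: "'x::finite kernel" and \<alpha> :: "'x \<Rightarrow> real"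
  assumes K: "kcone K" and am: "0 < amin" "\<forall>x. amin \<le> \<alpha> x"
    and D: "D \<in> Dset \<alpha> L"
  shows "\<exists>D'\<in>Dset \<alpha> K. knorm (D - D') \<le> 2 * knorm (L - K) / amin"
proof -
  have ap: "\<And>x. 0 < \<alpha> x" using am by (meson less_le_trans)
  have Doff: "\<And>x y. y \<noteq> x \<Longrightarrow> 0 \<le> D x y" and Dm: "\<And>x. kmass D x = 0"
    and ub: "\<And>x y. y \<noteq> x \<Longrightarrow> D x y \<le> L x y / \<alpha> x"
    using D unfolding Dset_def kcone_def by auto
  have Koff: "\<And>x y. y \<noteq> x \<Longrightarrow> 0 \<le> K x y" using K unfolding kcone_def by auto
  define F where "F = (\<lambda>x y. min (D x y) (K x y / \<alpha> x))"
  define D' where "D' = (\<lambda>x y. if y = x then - (\<Sum>z\<in>UNIV - {x}. F x z) else F x y)"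
  have Dxx: "\<And>x. D x x = - (\<Sum>y\<in>UNIV - {x}. D x y)"
  proof -
    fix x show "D x x = - (\<Sum>y\<in>UNIV - {x}. D x y)" using Dm[of x] kmass_split[of D x] by linarith
  qed
  have sumD': "\<And>x. (\<Sum>y\<in>UNIV - {x}. D' x y) = (\<Sum>y\<in>UNIV - {x}. F x y)"
    by (rule sum.cong) (auto simp: D'_def)
  have kc: "kcone D'" unfolding kcone_def
  proof (intro conjI allI impI)
    fix x y :: 'x assume "y \<noteq> x"
    then show "0 \<le> D' x y" using Doff Koff ap by (simp add: D'_def F_def divide_nonneg_pos)
  next
    fix x :: 'x
    show "kmass D' x = 0" unfolding kmass_split[of D' x] sumD' by (simp add: D'_def)
  qed
  have D'D: "D' \<in> Dset \<alpha> K" unfolding Dset_def using kc by (auto simp: D'_def F_def)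
  have pt: "\<bar>D x y - F x y\<bar> \<le> \<bar>(L - K) x y\<bar> / amin" if "y \<noteq> x" for x y :: 'x
  proof -
    have a: "0 < \<alpha> x" "amin \<le> \<alpha> x" using ap am by auto
    have "D x y - F x y \<le> \<bar>(L - K) x y\<bar> / amin"
    proof (cases "D x y \<le> K x y / \<alpha> x")
      case True then show ?thesis using am by (simp add: F_def)
    next
      case False
      then have "D x y - F x y = D x y - K x y / \<alpha> x" by (simp add: F_def)
      also have "\<dots> \<le> L x y / \<alpha> x - K x y / \<alpha> x" using ub[OF that] by simp
      also have "\<dots> = (L x y - K x y) / \<alpha> x" by (simp add: diff_divide_distrib)
      also have "\<dots> \<le> \<bar>L x y - K x y\<bar> / \<alpha> x" using a by (simp add: divide_right_mono)
      also have "\<dots> \<le> \<bar>L x y - K x y\<bar> / amin" using a am by (simp add: frac_le)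
      finally show ?thesis by simp
    qed
    moreover have "0 \<le> D x y - F x y" by (simp add: F_def)
    ultimately show ?thesis by simp
  qed
  have "knorm (D - D') \<le> 2 * knorm (L - K) / amin"
  proof (rule knorm_le, rule allI)
    fix x :: 'x
    have s1: "(\<Sum>y\<in>UNIV. \<bar>(D - D') x y\<bar>) = \<bar>D x x - D' x x\<bar> + (\<Sum>y\<in>UNIV - {x}. \<bar>D x y - F x y\<bar>)"
    proof -
      have "(\<Sum>y\<in>UNIV. \<bar>(D - D') x y\<bar>) = \<bar>(D - D') x x\<bar> + (\<Sum>y\<in>UNIV - {x}. \<bar>(D - D') x y\<bar>)"
        by (rule sum.remove) auto
      also have "(\<Sum>y\<in>UNIV - {x}. \<bar>(D - D') x y\<bar>) = (\<Sum>y\<in>UNIV - {x}. \<bar>D x y - F x y\<bar>)"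
        by (rule sum.cong) (auto simp: D'_def)
      finally show ?thesis by simp
    qed
    have "D x x - D' x x = - (\<Sum>y\<in>UNIV - {x}. D x y - F x y)"
      unfolding Dxx by (simp add: D'_def sum_subtractf)
    then have s2: "\<bar>D x x - D' x x\<bar> \<le> (\<Sum>y\<in>UNIV - {x}. \<bar>D x y - F x y\<bar>)"
      by (simp add: sum_abs)
    have s3: "(\<Sum>y\<in>UNIV - {x}. \<bar>D x y - F x y\<bar>) \<le> (\<Sum>y\<in>UNIV - {x}. \<bar>(L - K) x y\<bar> / amin)"
      by (rule sum_mono) (use pt in auto)
    have "(\<Sum>y\<in>UNIV - {x}. \<bar>(L - K) x y\<bar> / amin) = (\<Sum>y\<in>UNIV - {x}. \<bar>(L - K) x y\<bar>) / amin"
      by (simp add: sum_divide_distrib)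
    also have "\<dots> \<le> (\<Sum>y\<in>UNIV. \<bar>(L - K) x y\<bar>) / amin"
      using am by (intro divide_right_mono sum_mono2) auto
    also have "\<dots> \<le> knorm (L - K) / amin"
      using am by (intro divide_right_mono knorm_rowabs) auto
    finally have s4: "(\<Sum>y\<in>UNIV - {x}. \<bar>(L - K) x y\<bar> / amin) \<le> knorm (L - K) / amin" .
    show "(\<Sum>y\<in>UNIV. \<bar>(D - D') x y\<bar>) \<le> 2 * knorm (L - K) / amin"
      using s1 s2 s3 s4 by linarith
  qed
  then show ?thesis using D'D by blast
qed

lemma kdist_bound:
  fixes L K :: "'x::finite kernel" and \<alpha> :: "'x \<Rightarrow> real"
  assumes K: "kcone K" and L: "kcone L" and am: "0 < amin" "\<forall>x. amin \<le> \<alpha> x"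
  shows "kdist (Dset \<alpha> L) (Dset \<alpha> K) \<le> ereal (2 * knorm (L - K) / amin)"
    and "0 \<le> kdist (Dset \<alpha> L) (Dset \<alpha> K)"
proof -
  have ap: "\<forall>x. 0 < \<alpha> x" using am by (meson less_le_trans)
  have neK: "Dset \<alpha> K \<noteq> {}" and neL: "Dset \<alpha> L \<noteq> {}" using Dset_zero[OF K ap] Dset_zero[OF L ap] by auto
  have "(SUP A\<in>Dset \<alpha> L. kd A (Dset \<alpha> K)) \<le> ereal (2 * knorm (L - K) / amin)"
  proof (rule SUP_least)
    fix A assume "A \<in> Dset \<alpha> L"
    then obtain D' where "D' \<in> Dset \<alpha> K" "knorm (A - D') \<le> 2 * knorm (L - K) / amin"
      using haus[OF K am] by blast
    then show "kd A (Dset \<alpha> K) \<le> ereal (2 * knorm (L - K) / amin)"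
      using kd_le[of D' "Dset \<alpha> K" A] by (meson ereal_less_eq(3) order_trans)
  qed
  moreover have "(SUP A\<in>Dset \<alpha> K. kd A (Dset \<alpha> L)) \<le> ereal (2 * knorm (L - K) / amin)"
  proof (rule SUP_least)
    fix A assume "A \<in> Dset \<alpha> K"
    then obtain D' where "D' \<in> Dset \<alpha> L" "knorm (A - D') \<le> 2 * knorm (K - L) / amin"
      using haus[OF L am] by blast
    then show "kd A (Dset \<alpha> L) \<le> ereal (2 * knorm (L - K) / amin)"
      using kd_le[of D' "Dset \<alpha> L" A] knorm_sym[of K L] by (metis ereal_less_eq(3) order_trans)
  qed
  ultimately show "kdist (Dset \<alpha> L) (Dset \<alpha> K) \<le> ereal (2 * knorm (L - K) / amin)"
    unfolding kdist_def by simp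
  have "0 \<le> kd (\<lambda>x y. 0) (Dset \<alpha> K)" by (rule kd_nonneg[OF neK])
  also have "\<dots> \<le> (SUP A\<in>Dset \<alpha> L. kd A (Dset \<alpha> K))"
    by (rule SUP_upper) (rule Dset_zero[OF L ap])
  also have "\<dots> \<le> kdist (Dset \<alpha> L) (Dset \<alpha> K)" unfolding kdist_def by simp
  finally show "0 \<le> kdist (Dset \<alpha> L) (Dset \<alpha> K)" .
qed



theorem theorem7p6:
  fixes \<alpha> :: "'x::finite \<Rightarrow> real" and amin amax :: real and K :: "'x kernel"
  assumes "0 < amin" and "amin \<le> amax" and "amax < 1"
    and "\<forall>x. amin \<le> \<alpha> x \<and> \<alpha> x \<le> amax"
    and "K \<in> tangent_cone_I"
  shows "semidiff_at_I (risk_multikernel (avar_dual \<alpha>)) K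
           {D \<in> tangent_cone_I. (\<forall>x y. y \<noteq> x \<longrightarrow> 0 \<le> D x y \<and> D x y \<le> K x y / \<alpha> x)
                                \<and> (\<forall>x. kmass D x = 0)}"
proof -
  note am = assms(1-4)
  have amn: "\<forall>x. amin \<le> \<alpha> x" using am by auto
  have ap: "\<forall>x. 0 < \<alpha> x" using am by (meson less_le_trans)
  have Kc: "kcone K" using assms(5) tc_iff by blast
  define T where "T = {D \<in> tangent_cone_I. (\<forall>x y. y \<noteq> x \<longrightarrow> 0 \<le> D x y \<and> D x y \<le> K x y / \<alpha> x)
                                \<and> (\<forall>x. kmass D x = 0)}"
  have T: "T = Dset \<alpha> K" unfolding T_def Dset_def tc_iff kcone_def by auto
  have "T \<noteq> {}" unfolding T using Dset_zero[OF Kc ap] by blast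
  moreover have "\<forall>\<epsilon> Ks. (\<forall>n. 0 < \<epsilon> n) \<and> decseq \<epsilon> \<and> \<epsilon> \<longlonglongrightarrow> 0 \<and>
        (\<forall>n. Ks n \<in> tangent_cone_I) \<and> (\<lambda>n. knorm (Ks n - K)) \<longlonglongrightarrow> 0 \<longrightarrow>
        (\<lambda>n. kdist ((\<lambda>M x y. (M x y - id_kernel x y) / \<epsilon> n)
                       ` risk_multikernel (avar_dual \<alpha>) (\<lambda>x y. id_kernel x y + \<epsilon> n * Ks n x y)) T) \<longlonglongrightarrow> 0"
  proof (intro allI impI, elim conjE)
    fix \<epsilon> :: "nat \<Rightarrow> real" and Ks :: "nat \<Rightarrow> 'x kernel"
    assume ep: "\<forall>n. 0 < \<epsilon> n" and "decseq \<epsilon>" and el: "\<epsilon> \<longlonglongrightarrow> 0"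
      and Kst: "\<forall>n. Ks n \<in> tangent_cone_I" and Kl: "(\<lambda>n. knorm (Ks n - K)) \<longlonglongrightarrow> 0"
    have Ksc: "\<And>n. kcone (Ks n)" using Kst tc_iff by blast
    define s where "s = (\<Sum>x\<in>UNIV. \<bar>K x x\<bar>)"
    define c0 where "c0 = min amin (1 - amax)"
    have c0: "0 < c0" using am unfolding c0_def by auto
    have "(\<lambda>n. \<epsilon> n * (s + knorm (Ks n - K))) \<longlonglongrightarrow> 0 * (s + 0)"
      by (intro tendsto_intros el Kl)
    then have "(\<lambda>n. \<epsilon> n * (s + knorm (Ks n - K))) \<longlonglongrightarrow> 0" by simp
    then have evg: "eventually (\<lambda>n. \<epsilon> n * (s + knorm (Ks n - K)) < c0) sequentially"
      using c0 by (simp add: order_tendstoD(2))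
    define f where "f = (\<lambda>n. kdist ((\<lambda>M x y. (M x y - id_kernel x y) / \<epsilon> n)
                       ` risk_multikernel (avar_dual \<alpha>) (\<lambda>x y. id_kernel x y + \<epsilon> n * Ks n x y)) T)"
    define h where "h = (\<lambda>n. ereal (2 * knorm (Ks n - K) / amin))"
    have evf: "eventually (\<lambda>n. f n = kdist (Dset \<alpha> (Ks n)) (Dset \<alpha> K)) sequentially"
      using evg
    proof eventually_elim
      case (elim n)
      have e: "0 < \<epsilon> n" using ep by auto
      have bd: "\<And>x. \<epsilon> n * \<bar>Ks n x x\<bar> \<le> c0"
      proof -
        fix x
        have "\<bar>K x x\<bar> \<le> s" unfolding s_def by (rule member_le_sum) auto
        moreover have "\<bar>(Ks n - K) x x\<bar> \<le> knorm (Ks n - K)" by (rule knorm_entry)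
        ultimately have "\<bar>Ks n x x\<bar> \<le> s + knorm (Ks n - K)" by simp
        then have "\<epsilon> n * \<bar>Ks n x x\<bar> \<le> \<epsilon> n * (s + knorm (Ks n - K))" using e by (intro mult_left_mono) auto
        then show "\<epsilon> n * \<bar>Ks n x x\<bar> \<le> c0" using elim by linarith
      qed
      have c1: "\<forall>x. \<epsilon> n * (- Ks n x x) \<le> \<alpha> x"
      proof
        fix x
        have "\<epsilon> n * (- Ks n x x) \<le> \<epsilon> n * \<bar>Ks n x x\<bar>" using e by (intro mult_left_mono) auto
        then show "\<epsilon> n * (- Ks n x x) \<le> \<alpha> x" using bd[of x] amn[rule_format, of x] min.cobounded1[of amin "1 - amax"] unfolding c0_def by linarith
      qed
      have c2: "\<forall>x. \<alpha> x \<le> 1 + \<epsilon> n * Ks n x x"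
      proof
        fix x
        have "\<epsilon> n * (- \<bar>Ks n x x\<bar>) \<le> \<epsilon> n * Ks n x x" using e by (intro mult_left_mono) auto
        then show "\<alpha> x \<le> 1 + \<epsilon> n * Ks n x x" using bd[of x] am(4)[rule_format, of x] min.cobounded2[of amin "1 - amax"] unfolding c0_def by linarith
      qed
      show ?case unfolding f_def T using image_eq_Dset[OF e Ksc ap c1 c2] by simp
    qed
    have "(\<lambda>n. 2 * knorm (Ks n - K) / amin) \<longlonglongrightarrow> 2 * 0 / amin"
      by (intro tendsto_intros Kl) (use am in simp)
    then have "h \<longlonglongrightarrow> ereal 0" unfolding h_def by (simp add: lim_ereal)
    then have hl: "h \<longlonglongrightarrow> 0" by (simp add: zero_ereal_def)
    have lo: "eventually (\<lambda>n. 0 \<le> f n) sequentially"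
      using evf by eventually_elim (simp add: kdist_bound(2)[OF Kc Ksc am(1) amn])
    have up: "eventually (\<lambda>n. f n \<le> h n) sequentially"
      using evf by eventually_elim (simp add: h_def kdist_bound(1)[OF Kc Ksc am(1) amn])
    have "f \<longlonglongrightarrow> 0" by (rule tendsto_sandwich[OF lo up tendsto_const hl])
    then show "(\<lambda>n. kdist ((\<lambda>M x y. (M x y - id_kernel x y) / \<epsilon> n)
                       ` risk_multikernel (avar_dual \<alpha>) (\<lambda>x y. id_kernel x y + \<epsilon> n * Ks n x y)) T) \<longlonglongrightarrow> 0"
      unfolding f_def .
  qed
  ultimately show ?thesis unfolding semidiff_at_I_def T_def[symmetric] using assms(5) by blast
qed


end
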